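(* Let $\pi\in\mathcal S_n$, $\eta\in\mathcal S_d$, $M\in\mathbb{C}_{\mathrm{Biso}}(\pi,\eta)$, $p,h\in[0,1]$ with $h>0$, $\sigma>0$, $\delta\in(0,1)$, and $\tilde Y$ generated as in the model below with parameter $\mu$. Let $(E_1,\dots,E_r)$ be a partition of $[n]$ and $v\in\{0,1\}^r$ such that (i) $v_s=1\Rightarrow\lambda_1|E_s|>4\rho^2/h^2$, and (ii) if $v_s=v_{s'}=1$ with $s<s'$ then $\pi(i)<\pi(i')$ for all $i\in E_s$, $i'\in E_{s'}$. For each $s$ with $v_s=1$ let $Q_s$ be the envelope defined below. Then with probability at least $1-\frac{\delta}{12\lceil\log_2(n\vee d)\rceil(n\vee d)^{1/2}}$, \[ \sum_{s:\,v_s=1}|Q_s|\leq 3d\qquad\text{and}\qquad Q^*(E_s)\subseteq Q_s\ \text{ for all } s \text{ with } v_s=1 . \]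
   Context: A matrix is bi-isotonic if non-increasing along rows and columns; $\mathbb{C}_{\mathrm{Biso}}(\pi,\eta)$ is the set of $M\in[0,1]^{n\times d}$ with $(M_{\pi^{-1}(i)\eta^{-1}(j)})_{ij}$ bi-isotonic. Model for $\tilde Y$: $N_{ij}$ i.i.d. $\mathrm{Poisson}(\mu)$, independent observations $\tilde Y_{i,j,k}=M_{ij}+W_{ijk}$ with $W_{ijk}$ independent centered $\sigma^2$-subGaussian ($\mathbb{E}e^{tW}\le e^{t^2\sigma^2/2}$), $\tilde Y_{ij}=\frac1{N_{ij}}\sum_{k\le N_{ij}}\tilde Y_{i,j,k}$ with $0/0=0$; $\lambda_1=1-e^{-\mu}$. Constants: $L=\log\big(24\,nd\,(n\vee d)^{1/2}\lceil\log_2(n\vee d)\rceil/\delta\big)$, $\rho=(1\vee\sigma)e\sqrt{8L}$. $Q^*(E)=\{j\in[d]:\ \max_{i\in E}M_{ij}\geq p+h,\ \min_{i\in E}M_{ij}\leq p-h\}$. Envelope of $E_s$ (with $v_s=1$): for $F\subseteq[n]$ write $\bar y_F(j)=\frac1{|F|}\sum_{i\in F}\tilde Y_{ij}$. If $s=\min\{t: v_t=1\}$ set $\underline Q=[d]$; else let $\underline s=\max\{t<s: v_t=1\}$ and $\underline Q=\{j\in[d]:\ \bar y_{E_{\underline s}}(j)\geq\lambda_1(p+h)-\rho\sqrt{\lambda_1/|E_{\underline s}|}\}$. If $s=\max\{t: v_t=1\}$ set $\overline Q=[d]$; else let $\overline s=\min\{t>s: v_t=1\}$ and $\overline Q=\{j\in[d]:\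 \bar y_{E_{\overline s}}(j)\leq\lambda_1(p-h)+\rho\sqrt{\lambda_1/|E_{\overline s}|}\}$. Then $Q_s=\underline Q\cap\overline Q$. *)

theory Defs
  imports "HOL-Probability.Probability" "HOL-Combinatorics.Permutations"
begin

text \<open>Index conventions: [n] = {..<n}, [d] = {..<d}; matrices are functions nat => nat => real.\<close>

definition bi_isotonic :: "nat \<Rightarrow> nat \<Rightarrow> (nat \<Rightarrow> nat \<Rightarrow> real) \<Rightarrow> bool" where
  "bi_isotonic n d B \<longleftrightarrow>
     (\<forall>i j j'. i < n \<and> j \<le> j' \<and> j' < d \<longrightarrow> B i j' \<le> B i j) \<and>
     (\<forall>i i' j. i \<le> i' \<and> i' < n \<and> j < d \<longrightarrow> B i' j \<le> B i j)"

definition C_Biso :: "nat \<Rightarrow> nat \<Rightarrow> (nat \<Rightarrow> nat) \<Rightarrow> (nat \<Rightarrow> nat) \<Rightarrow> (nat \<Rightarrow> nat \<Rightarrow> real) set" where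
  "C_Biso n d \<pi> \<eta> = {M. (\<forall>i<n. \<forall>j<d. 0 \<le> M i j \<and> M i j \<le> 1) \<and>
                         bi_isotonic n d (\<lambda>i j. M (inv \<pi> i) (inv \<eta> j))}"

definition Ytilde :: "(nat \<Rightarrow> nat \<Rightarrow> real) \<Rightarrow> (nat \<Rightarrow> nat \<Rightarrow> 'a \<Rightarrow> nat) \<Rightarrow>
    (nat \<Rightarrow> nat \<Rightarrow> nat \<Rightarrow> 'a \<Rightarrow> real) \<Rightarrow> nat \<Rightarrow> nat \<Rightarrow> 'a \<Rightarrow> real" where
  "Ytilde M N W i j \<omega> =
     (if N i j \<omega> = 0 then 0 else (\<Sum>k<N i j \<omega>. M i j + W i j k \<omega>) / real (N i j \<omega>))"

definition ybar :: "(nat \<Rightarrow> nat \<Rightarrow> 'a \<Rightarrow> real) \<Rightarrow> nat set \<Rightarrow> nat \<Rightarrow> 'a \<Rightarrow> real" where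
  "ybar Y F j \<omega> = (\<Sum>i\<in>F. Y i j \<omega>) / real (card F)"

definition Lconst :: "nat \<Rightarrow> nat \<Rightarrow> real \<Rightarrow> real" where
  "Lconst n d \<delta> = ln (24 * real n * real d * sqrt (real (max n d))
                       * real_of_int \<lceil>log 2 (real (max n d))\<rceil> / \<delta>)"

definition rho_const :: "real \<Rightarrow> nat \<Rightarrow> nat \<Rightarrow> real \<Rightarrow> real" where
  "rho_const \<sigma> n d \<delta> = max 1 \<sigma> * exp 1 * sqrt (8 * Lconst n d \<delta>)"

definition Qstar :: "nat \<Rightarrow> (nat \<Rightarrow> nat \<Rightarrow> real) \<Rightarrow> real \<Rightarrow> real \<Rightarrow> nat set \<Rightarrow> nat set" where
  "Qstar d M p h E = {j. j < d \<and> Max ((\<lambda>i. M i j) ` E) \<ge> p + h \<and> Min ((\<lambda>i. M i j) ` E) \<le> p - h}"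

definition envelope :: "nat \<Rightarrow> nat \<Rightarrow> (nat \<Rightarrow> bool) \<Rightarrow> (nat \<Rightarrow> nat set) \<Rightarrow>
    (nat \<Rightarrow> nat \<Rightarrow> 'a \<Rightarrow> real) \<Rightarrow> real \<Rightarrow> real \<Rightarrow> real \<Rightarrow> real \<Rightarrow> nat \<Rightarrow> 'a \<Rightarrow> nat set" where
  "envelope d r v E Y lam rho p h s \<omega> =
     (let Qlow = (if s = Min {t. t < r \<and> v t} then {..<d}
                  else (let su = Max {t. t < s \<and> v t} in
                        {j. j < d \<and> ybar Y (E su) j \<omega> \<ge> lam * (p + h) - rho * sqrt (lam / real (card (E su)))}));
          Qup = (if s = Max {t. t < r \<and> v t} then {..<d}
                  else (let so = Min {t. s < t \<and> t < r \<and> v t} in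
                        {j. j < d \<and> ybar Y (E so) j \<omega> \<le> lam * (p - h) + rho * sqrt (lam / real (card (E so)))}))
      in Qlow \<inter> Qup)"

end

theory Submission
  imports Defs
begin


lemma exp_quad: fixes x :: real assumes "x \<le> 1" shows "exp x \<le> 1 + x + x\<^sup>2"
proof (cases "0 \<le> x")
  case True then show ?thesis using exp_bound assms by blast
next
  case False
  define y where "y = -x"
  have y: "0 < y" using False y_def by simp
  have "1 + y \<le> exp y" by simp
  have "exp x = 1 / exp y" by (simp add: y_def exp_minus field_simps)
  also have "\<dots> \<le> 1 / (1 + y)" using y by (intro divide_left_mono) auto
  also have "\<dots> \<le> 1 - y + y\<^sup>2" using y by (simp add: field_simps power2_eq_square)
  finally show ?thesis by (simp add: y_def)
qed

lemma mgf_real_bound: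
  fixes t a lam \<sigma> :: real
  assumes s: "s = max 1 \<sigma>" and sig: "0 < \<sigma>" and t: "\<bar>t\<bar> \<le> 1 / (4 * s)"
    and a: "0 \<le> a" "a \<le> 1" and lam: "0 \<le> lam" "lam \<le> 1"
  shows "(1 - lam) * exp (- t * lam * a) + lam * exp (t * a * (1 - lam) + t\<^sup>2 * \<sigma>\<^sup>2 / 2)
         \<le> exp (2 * lam * s\<^sup>2 * t\<^sup>2)"
proof -
  define x where "x = t * a + t\<^sup>2 * \<sigma>\<^sup>2 / 2"
  have s1: "1 \<le> s" "\<sigma> \<le> s" using s by auto
  have ts: "\<bar>t\<bar> * s \<le> 1/4" using t s1 by (simp add: field_simps)
  have tsig: "\<bar>t\<bar> * \<sigma> \<le> 1/4" using ts s1 sig by (smt (verit) abs_ge_zero mult_left_mono)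
  have ta: "\<bar>t * a\<bar> \<le> \<bar>t\<bar>" using a by (simp add: abs_mult mult_left_le)
  have t1: "\<bar>t\<bar> \<le> 1/4" using ts s1 by (smt (verit) abs_ge_zero mult_left_mono mult_cancel_left1)
  have q: "t\<^sup>2 * \<sigma>\<^sup>2 = (\<bar>t\<bar> * \<sigma>)\<^sup>2" by (simp add: power_mult_distrib)
  have q2: "(\<bar>t\<bar> * \<sigma>)\<^sup>2 \<le> 1/16" using tsig sig
  proof -
    have "(\<bar>t\<bar> * \<sigma>)\<^sup>2 \<le> (1/4)\<^sup>2" using tsig sig by (intro power_mono) auto
    then show ?thesis by (simp add: power2_eq_square)
  qed
  have x1: "x \<le> 1" unfolding x_def using ta t1 q q2 by linarith
  have ex: "exp x \<le> 1 + x + x\<^sup>2" by (rule exp_quad[OF x1])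
  have tsig2: "\<bar>t\<bar> * \<sigma>\<^sup>2 \<le> s / 4"
  proof -
    have "\<bar>t\<bar> * \<sigma>\<^sup>2 = (\<bar>t\<bar> * \<sigma>) * \<sigma>" by (simp add: power2_eq_square)
    also have "\<dots> \<le> 1/4 * s" using tsig s1 sig by (intro mult_mono) auto
    finally show ?thesis by simp
  qed
  have xabs: "\<bar>x\<bar> \<le> \<bar>t\<bar> * (9/8 * s)"
  proof -
    have "\<bar>x\<bar> \<le> \<bar>t * a\<bar> + t\<^sup>2 * \<sigma>\<^sup>2 / 2" unfolding x_def by (simp add: abs_triangle_ineq[THEN order_trans])
    also have "t\<^sup>2 * \<sigma>\<^sup>2 / 2 = \<bar>t\<bar> * (\<bar>t\<bar> * \<sigma>\<^sup>2 / 2)" by (simp add: power2_eq_square)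
    also have "\<dots> \<le> \<bar>t\<bar> * (s / 8)" using tsig2 by (intro mult_left_mono) auto
    moreover have "\<bar>t\<bar> \<le> s * \<bar>t\<bar>" using s1 by (simp add: mult_right_mono[of 1 s, simplified])
    ultimately show ?thesis using ta by (simp add: algebra_simps)
  qed
  have x2: "x\<^sup>2 \<le> t\<^sup>2 * (81/64 * s\<^sup>2)"
  proof -
    have "x\<^sup>2 = \<bar>x\<bar>\<^sup>2" by simp
    also have "\<dots> \<le> (\<bar>t\<bar> * (9/8 * s))\<^sup>2" using xabs by (intro power_mono) auto
    also have "\<dots> = t\<^sup>2 * (81/64 * s\<^sup>2)" by (simp add: power_mult_distrib power_divide)
    finally show ?thesis .
  qed
  have sg2: "t\<^sup>2 * \<sigma>\<^sup>2 \<le> t\<^sup>2 * s\<^sup>2" using s1 sig by (intro mult_left_mono power_mono) auto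
  have key: "exp x - 1 - t * a \<le> 2 * (s\<^sup>2 * t\<^sup>2)"
  proof -
    have x2': "x\<^sup>2 \<le> 81/64 * (s\<^sup>2 * t\<^sup>2)" using x2 by (simp add: algebra_simps)
    have sg2': "t\<^sup>2 * \<sigma>\<^sup>2 \<le> s\<^sup>2 * t\<^sup>2" using sg2 by (simp add: algebra_simps)
    have u0: "0 \<le> s\<^sup>2 * t\<^sup>2" by simp
    have h1: "x\<^sup>2 + t\<^sup>2 * \<sigma>\<^sup>2 / 2 \<le> 2 * (s\<^sup>2 * t\<^sup>2)" using x2' sg2' u0 by linarith
    have h2: "x - t * a = t\<^sup>2 * \<sigma>\<^sup>2 / 2" unfolding x_def by simp
    show ?thesis using ex h1 h2 by linarith
  qed
  have "(1 - lam) * exp (- t * lam * a) + lam * exp (t * a * (1 - lam) + t\<^sup>2 * \<sigma>\<^sup>2 / 2)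
      = exp (- t * lam * a) * (1 + lam * (exp x - 1))"
    unfolding x_def by (simp add: algebra_simps flip: exp_add)
  also have "\<dots> \<le> exp (- t * lam * a) * exp (lam * (exp x - 1))"
    by (intro mult_left_mono) (auto simp: exp_ge_add_one_self)
  also have "\<dots> = exp (lam * (exp x - 1 - t * a))" by (simp add: algebra_simps flip: exp_add)
  also have "\<dots> \<le> exp (lam * (2 * (s\<^sup>2 * t\<^sup>2)))" using key lam
    by (simp add: mult_left_mono)
  also have "\<dots> = exp (2 * lam * s\<^sup>2 * t\<^sup>2)" by (simp add: algebra_simps)
  finally show ?thesis .
qed

lemma (in prob_space) termk:
  fixes A :: "nat \<Rightarrow> nat \<Rightarrow> real" and N :: "nat \<Rightarrow> nat \<Rightarrow> 'a \<Rightarrow> nat" and W :: "nat \<Rightarrow> nat \<Rightarrow> nat \<Rightarrow> 'a \<Rightarrow> real"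
    and X :: "'b \<Rightarrow> 'a \<Rightarrow> real" and inl :: 'b and inr :: "nat \<Rightarrow> 'b"
  assumes Nm: "N i j \<in> measurable M (count_space UNIV)"
    and Wm: "\<And>k. W i j k \<in> borel_measurable M"
    and Wint: "\<And>k u. integrable M (\<lambda>\<omega>. exp (u * W i j k \<omega>))"
    and Wsub: "\<And>k u. expectation (\<lambda>\<omega>. exp (u * W i j k \<omega>)) \<le> exp (u\<^sup>2 * \<sigma>\<^sup>2 / 2)"
    and ind: "indep_vars (\<lambda>_. borel) X (insert inl (range inr))"
    and inj: "inj inr" "inl \<notin> range inr"
    and XN: "X inl = (\<lambda>\<omega>. real (N i j \<omega>))" and XW: "\<And>k. X (inr k) = W i j k"
    and k: "0 < k"
  shows "(\<integral>\<^sup>+\<omega>. indicator {\<omega>. N i j \<omega> = k} \<omega> * ennreal (exp (t * ((\<Sum>k'<k. a + W i j k' \<omega>) / real k - lam * a))) \<partial>M)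
     \<le> emeasure M {\<omega>\<in>space M. N i j \<omega> = k} * ennreal (exp (t * a * (1 - lam) + t\<^sup>2 * \<sigma>\<^sup>2 / 2))"
proof -
  note [measurable] = Nm Wm
  have ne[simp]: "inr x \<noteq> inl" for x using inj(2) by (metis rangeI)
  define J where "J = insert inl (inr ` {..<k})"
  define Z where "Z x = (if x = inl then (\<lambda>r. indicator {real k} r :: ennreal) else (\<lambda>r. ennreal (exp (t / real k * r))))" for x
  have finJ: "finite J" unfolding J_def by simp
  have ind2: "indep_vars (\<lambda>_. borel) (\<lambda>x \<omega>. Z x (X x \<omega>)) J"
    apply (rule indep_vars_compose2[OF indep_vars_subset[OF ind]])
    unfolding J_def Z_def by auto
  define c where "c = exp (t * a * (1 - lam))"
  have pw: "indicator {\<omega>. N i j \<omega> = k} \<omega> * ennreal (exp (t * ((\<Sum>k'<k. a + W i j k' \<omega>) / real k - lam * a)))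
      = ennreal c * (\<Prod>x\<in>J. Z x (X x \<omega>))" for \<omega>
  proof -
    have inr_notin: "inl \<notin> inr ` {..<k}" using inj by auto
    have "(\<Prod>x\<in>J. Z x (X x \<omega>)) = Z inl (X inl \<omega>) * (\<Prod>x\<in>inr ` {..<k}. Z x (X x \<omega>))"
      unfolding J_def using inr_notin by (simp add: prod.insert)
    also have "(\<Prod>x\<in>inr ` {..<k}. Z x (X x \<omega>)) = (\<Prod>k'<k. ennreal (exp (t / real k * W i j k' \<omega>)))"
      using inj by (subst prod.reindex) (auto simp: Z_def XW inj_on_def)
    also have "\<dots> = ennreal (exp (\<Sum>k'<k. t / real k * W i j k' \<omega>))"
      by (simp add: prod_ennreal exp_sum)
    finally have P: "(\<Prod>x\<in>J. Z x (X x \<omega>)) = indicator {real k} (real (N i j \<omega>)) * ennreal (exp (\<Sum>k'<k. t / real k * W i j k' \<omega>))"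
      by (simp add: Z_def XN)
    have S: "t * ((\<Sum>k'<k. a + W i j k' \<omega>) / real k - lam * a) = t * a * (1 - lam) + (\<Sum>k'<k. t / real k * W i j k' \<omega>)"
      using k by (simp add: sum.distrib sum_divide_distrib[symmetric] sum_distrib_left[symmetric] field_simps)
    have I: "indicator {\<omega>. N i j \<omega> = k} \<omega> = (indicator {real k} (real (N i j \<omega>)) :: ennreal)"
      by (simp add: indicator_def)
    show ?thesis unfolding P S I c_def
      by (simp add: exp_add ennreal_mult' mult_ac)
  qed
  have "(\<integral>\<^sup>+\<omega>. indicator {\<omega>. N i j \<omega> = k} \<omega> * ennreal (exp (t * ((\<Sum>k'<k. a + W i j k' \<omega>) / real k - lam * a))) \<partial>M)
      = (\<integral>\<^sup>+\<omega>. ennreal c * (\<Prod>x\<in>J. Z x (X x \<omega>)) \<partial>M)" by (simp add: pw)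
  also have "\<dots> = ennreal c * (\<integral>\<^sup>+\<omega>. (\<Prod>x\<in>J. Z x (X x \<omega>)) \<partial>M)"
  proof (intro nn_integral_cmult)
    have "\<forall>i\<in>J. random_variable borel (\<lambda>\<omega>. Z i (X i \<omega>))" using ind2 by (simp add: indep_vars_def)
    then show "(\<lambda>\<omega>. \<Prod>x\<in>J. Z x (X x \<omega>)) \<in> borel_measurable M" by (intro borel_measurable_prod_ennreal) auto
  qed
  also have "(\<integral>\<^sup>+\<omega>. (\<Prod>x\<in>J. Z x (X x \<omega>)) \<partial>M) = (\<Prod>x\<in>J. \<integral>\<^sup>+\<omega>. Z x (X x \<omega>) \<partial>M)"
    by (rule indep_vars_nn_integral[OF finJ ind2]) simp
  also have "\<dots> = (\<integral>\<^sup>+\<omega>. Z inl (X inl \<omega>) \<partial>M) * (\<Prod>k'<k. \<integral>\<^sup>+\<omega>. Z (inr k') (X (inr k') \<omega>) \<partial>M)"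
    unfolding J_def using inj by (subst prod.insert) (auto simp: prod.reindex inj_on_def)
  also have "(\<integral>\<^sup>+\<omega>. Z inl (X inl \<omega>) \<partial>M) = emeasure M {\<omega>\<in>space M. N i j \<omega> = k}"
  proof -
    have "(\<integral>\<^sup>+\<omega>. Z inl (X inl \<omega>) \<partial>M) = (\<integral>\<^sup>+\<omega>. indicator {\<omega>\<in>space M. N i j \<omega> = k} \<omega> \<partial>M)"
      by (intro nn_integral_cong) (auto simp: Z_def XN indicator_def)
    also have "\<dots> = emeasure M {\<omega>\<in>space M. N i j \<omega> = k}" by (intro nn_integral_indicator) measurable
    finally show ?thesis .
  qed
  finally have F1: "(\<integral>\<^sup>+\<omega>. indicator {\<omega>. N i j \<omega> = k} \<omega> * ennreal (exp (t * ((\<Sum>k'<k. a + W i j k' \<omega>) / real k - lam * a))) \<partial>M)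
     = ennreal c * (emeasure M {\<omega>\<in>space M. N i j \<omega> = k} * (\<Prod>k'<k. \<integral>\<^sup>+\<omega>. Z (inr k') (X (inr k') \<omega>) \<partial>M))" .
  have F2: "(\<Prod>k'<k. \<integral>\<^sup>+\<omega>. Z (inr k') (X (inr k') \<omega>) \<partial>M) \<le> ennreal (exp (t\<^sup>2 * \<sigma>\<^sup>2 / 2))"
  proof -
    have e: "(\<integral>\<^sup>+\<omega>. Z (inr k') (X (inr k') \<omega>) \<partial>M) = ennreal (expectation (\<lambda>\<omega>. exp (t / real k * W i j k' \<omega>)))" for k'
    proof -
      have "(\<integral>\<^sup>+\<omega>. Z (inr k') (X (inr k') \<omega>) \<partial>M) = (\<integral>\<^sup>+\<omega>. ennreal (exp (t / real k * W i j k' \<omega>)) \<partial>M)"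
        using inj by (auto simp: Z_def XW)
      also have "\<dots> = ennreal (expectation (\<lambda>\<omega>. exp (t / real k * W i j k' \<omega>)))"
        by (intro nn_integral_eq_integral Wint) auto
      finally show ?thesis .
    qed
    have "(\<Prod>k'<k. \<integral>\<^sup>+\<omega>. Z (inr k') (X (inr k') \<omega>) \<partial>M) = ennreal (\<Prod>k'<k. expectation (\<lambda>\<omega>. exp (t / real k * W i j k' \<omega>)))"
      by (simp add: e prod_ennreal integral_nonneg_AE)
    also have "(\<Prod>k'<k. expectation (\<lambda>\<omega>. exp (t / real k * W i j k' \<omega>))) \<le> (\<Prod>k'<k. exp ((t / real k)\<^sup>2 * \<sigma>\<^sup>2 / 2))"
      by (intro prod_mono conjI integral_nonneg_AE Wsub) auto
    also have "\<dots> = exp (real k * ((t / real k)\<^sup>2 * \<sigma>\<^sup>2 / 2))"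
      by (simp only: prod_constant card_lessThan exp_of_nat_mult)
    also have "\<dots> \<le> exp (t\<^sup>2 * \<sigma>\<^sup>2 / 2)"
    proof -
      have "real k * ((t / real k)\<^sup>2 * \<sigma>\<^sup>2 / 2) = (t\<^sup>2 * \<sigma>\<^sup>2 / 2) / real k"
        using k by (simp add: power_divide power2_eq_square field_simps)
      also have "\<dots> \<le> t\<^sup>2 * \<sigma>\<^sup>2 / 2" using k by (simp add: divide_le_eq mult_le_cancel_left1) (metis mult_nonneg_nonneg zero_le_power2 not_less)
      finally show ?thesis by simp
    qed
    finally show ?thesis by (simp add: ennreal_leI)
  qed
  have F: "(\<integral>\<^sup>+\<omega>. indicator {\<omega>. N i j \<omega> = k} \<omega> * ennreal (exp (t * ((\<Sum>k'<k. a + W i j k' \<omega>) / real k - lam * a))) \<partial>M)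
     \<le> ennreal c * (emeasure M {\<omega>\<in>space M. N i j \<omega> = k} * ennreal (exp (t\<^sup>2 * \<sigma>\<^sup>2 / 2)))"
    unfolding F1 by (intro mult_left_mono F2) auto
  then show ?thesis
    by (simp add: c_def exp_add ennreal_mult' mult_ac)
qed

lemma (in prob_space) mgf_Ytilde:
  fixes A :: "nat \<Rightarrow> nat \<Rightarrow> real" and N :: "nat \<Rightarrow> nat \<Rightarrow> 'a \<Rightarrow> nat" and W :: "nat \<Rightarrow> nat \<Rightarrow> nat \<Rightarrow> 'a \<Rightarrow> real"
    and X :: "'b \<Rightarrow> 'a \<Rightarrow> real" and inl :: 'b and inr :: "nat \<Rightarrow> 'b"
  assumes Nm: "N i j \<in> measurable M (count_space UNIV)"
    and Np: "distr M (count_space UNIV) (N i j) = measure_pmf (poisson_pmf \<mu>)"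
    and Wm: "\<And>k. W i j k \<in> borel_measurable M"
    and Wint: "\<And>k u. integrable M (\<lambda>\<omega>. exp (u * W i j k \<omega>))"
    and Wsub: "\<And>k u. expectation (\<lambda>\<omega>. exp (u * W i j k \<omega>)) \<le> exp (u\<^sup>2 * \<sigma>\<^sup>2 / 2)"
    and ind: "indep_vars (\<lambda>_. borel) X (insert inl (range inr))"
    and inj: "inj inr" "inl \<notin> range inr"
    and XN: "X inl = (\<lambda>\<omega>. real (N i j \<omega>))" and XW: "\<And>k. X (inr k) = W i j k"
    and sig: "0 < \<sigma>" and mu: "0 < \<mu>" and a: "0 \<le> A i j" "A i j \<le> 1"
    and s: "s = max 1 \<sigma>" and t: "\<bar>t\<bar> \<le> 1 / (4 * s)"
  shows "(\<integral>\<^sup>+\<omega>. ennreal (exp (t * (Ytilde A N W i j \<omega> - (1 - exp (- \<mu>)) * A i j))) \<partial>M)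
          \<le> ennreal (exp (2 * (1 - exp (- \<mu>)) * s\<^sup>2 * t\<^sup>2))"
proof -
  note [measurable] = Nm Wm
  define lam where "lam = 1 - exp (- \<mu>)"
  define a where "a = A i j"
  have lam: "0 \<le> lam" "lam \<le> 1" using mu by (auto simp: lam_def)
  define g where "g k \<omega> = ennreal (exp (t * ((if k = 0 then 0 else (\<Sum>k'<k. a + W i j k' \<omega>) / real k) - lam * a)))" for k \<omega>
  define h where "h k = (if k = 0 then exp (- t * lam * a) else exp (t * a * (1 - lam) + t\<^sup>2 * \<sigma>\<^sup>2 / 2))" for k :: nat
  have gm[measurable]: "g k \<in> borel_measurable M" for k unfolding g_def by measurable
  have pw: "ennreal (exp (t * (Ytilde A N W i j \<omega> - lam * a))) = (\<Sum>k. indicator {\<omega>. N i j \<omega> = k} \<omega> * g k \<omega>)" for \<omega>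
  proof -
    have "(\<Sum>k. indicator {\<omega>. N i j \<omega> = k} \<omega> * g k \<omega>) = (\<Sum>k\<in>{N i j \<omega>}. indicator {\<omega>. N i j \<omega> = k} \<omega> * g k \<omega>)"
      by (rule suminf_finite) auto
    also have "\<dots> = g (N i j \<omega>) \<omega>" by simp
    finally show ?thesis by (simp add: g_def Ytilde_def a_def)
  qed
  have pk: "emeasure M {\<omega>\<in>space M. N i j \<omega> = k} = ennreal (pmf (poisson_pmf \<mu>) k)" for k
  proof -
    have "emeasure M {\<omega>\<in>space M. N i j \<omega> = k} = emeasure (distr M (count_space UNIV) (N i j)) {k}"
      by (subst emeasure_distr) (auto intro!: arg_cong[where f="emeasure M"])
    also have "\<dots> = ennreal (pmf (poisson_pmf \<mu>) k)" by (simp add: Np emeasure_pmf_single)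
    finally show ?thesis .
  qed
  have tk: "(\<integral>\<^sup>+\<omega>. indicator {\<omega>. N i j \<omega> = k} \<omega> * g k \<omega> \<partial>M) \<le> ennreal (pmf (poisson_pmf \<mu>) k) * ennreal (h k)" for k
  proof (cases "k = 0")
    case True
    have "(\<integral>\<^sup>+\<omega>. indicator {\<omega>. N i j \<omega> = k} \<omega> * g k \<omega> \<partial>M)
        = (\<integral>\<^sup>+\<omega>. ennreal (h k) * indicator {\<omega>\<in>space M. N i j \<omega> = k} \<omega> \<partial>M)"
      using True by (intro nn_integral_cong) (auto simp: g_def h_def indicator_def mult_ac)
    also have "\<dots> = ennreal (h k) * emeasure M {\<omega>\<in>space M. N i j \<omega> = k}"
      by (intro nn_integral_cmult_indicator) measurable
    finally show ?thesis by (simp add: pk mult_ac)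
  next
    case False
    have "(\<integral>\<^sup>+\<omega>. indicator {\<omega>. N i j \<omega> = k} \<omega> * g k \<omega> \<partial>M)
        = (\<integral>\<^sup>+\<omega>. indicator {\<omega>. N i j \<omega> = k} \<omega> * ennreal (exp (t * ((\<Sum>k'<k. a + W i j k' \<omega>) / real k - lam * a))) \<partial>M)"
      using False by (simp add: g_def)
    also have "\<dots> \<le> emeasure M {\<omega>\<in>space M. N i j \<omega> = k} * ennreal (exp (t * a * (1 - lam) + t\<^sup>2 * \<sigma>\<^sup>2 / 2))"
      by (rule termk[where N=N and W=W and i=i and j=j and X=X and \<sigma>=\<sigma>, OF Nm Wm Wint Wsub ind inj XN XW]) (use False in auto)
    finally show ?thesis using False by (simp add: pk h_def)
  qed
  have "(\<integral>\<^sup>+\<omega>. ennreal (exp (t * (Ytilde A N W i j \<omega> - lam * a))) \<partial>M)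
      = (\<Sum>k. \<integral>\<^sup>+\<omega>. indicator {\<omega>. N i j \<omega> = k} \<omega> * g k \<omega> \<partial>M)"
    unfolding pw by (rule nn_integral_suminf) measurable
  also have "\<dots> \<le> (\<Sum>k. ennreal (pmf (poisson_pmf \<mu>) k) * ennreal (h k))"
    by (intro suminf_le tk) auto
  also have "\<dots> = (\<integral>\<^sup>+k. ennreal (h k) \<partial>measure_pmf (poisson_pmf \<mu>))"
    by (simp add: nn_integral_measure_pmf nn_integral_count_space_nat)
  also have "\<dots> = (\<integral>\<^sup>+k. ennreal (h 0) * indicator {0} k + ennreal (h 1) * indicator (UNIV - {0}) k \<partial>measure_pmf (poisson_pmf \<mu>))"
    by (intro nn_integral_cong) (auto simp: h_def indicator_def)
  also have "\<dots> = ennreal (h 0) * emeasure (measure_pmf (poisson_pmf \<mu>)) {0}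
                 + ennreal (h 1) * emeasure (measure_pmf (poisson_pmf \<mu>)) (UNIV - {0})"
    by (subst nn_integral_add) (auto simp: nn_integral_cmult_indicator)
  also have "\<dots> = ennreal (h 0 * exp (- \<mu>) + h 1 * (1 - exp (- \<mu>)))"
  proof -
    have e0: "emeasure (measure_pmf (poisson_pmf \<mu>)) {0} = ennreal (exp (- \<mu>))"
      by (simp add: emeasure_pmf_single pmf_poisson[OF mu])
    have "measure (measure_pmf (poisson_pmf \<mu>)) (UNIV - {0}) = 1 - measure (measure_pmf (poisson_pmf \<mu>)) {0}"
      using measure_pmf.prob_compl[of "{0}" "poisson_pmf \<mu>"] by simp
    also have "\<dots> = 1 - exp (- \<mu>)" by (simp add: measure_pmf_single pmf_poisson[OF mu])
    finally have e1: "emeasure (measure_pmf (poisson_pmf \<mu>)) (UNIV - {0}) = ennreal (1 - exp (- \<mu>))"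
      by (simp add: measure_pmf.emeasure_eq_measure)
    show ?thesis unfolding e0 e1 using mu
      by (simp add: ennreal_mult'[symmetric] ennreal_plus[symmetric] h_def del: ennreal_plus)
  qed
  also have "\<dots> \<le> ennreal (exp (2 * lam * s\<^sup>2 * t\<^sup>2))"
  proof (rule ennreal_leI)
    have "h 0 * exp (- \<mu>) + h 1 * (1 - exp (- \<mu>)) = (1 - lam) * exp (- t * lam * a) + lam * exp (t * a * (1 - lam) + t\<^sup>2 * \<sigma>\<^sup>2 / 2)"
      by (simp add: h_def lam_def)
    also have "\<dots> \<le> exp (2 * lam * s\<^sup>2 * t\<^sup>2)"
      by (rule mgf_real_bound[OF s sig t]) (use a lam in \<open>auto simp: a_def\<close>)
    finally show "h 0 * exp (- \<mu>) + h 1 * (1 - exp (- \<mu>)) \<le> exp (2 * lam * s\<^sup>2 * t\<^sup>2)" .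
  qed
  finally show ?thesis by (simp add: lam_def a_def)
qed




definition XX :: "(nat \<Rightarrow> nat \<Rightarrow> 'a \<Rightarrow> nat) \<Rightarrow> (nat \<Rightarrow> nat \<Rightarrow> nat \<Rightarrow> 'a \<Rightarrow> real) \<Rightarrow> (nat \<times> nat) + (nat \<times> nat \<times> nat) \<Rightarrow> 'a \<Rightarrow> real" where
  "XX N W = (\<lambda>x \<omega>. case x of Inl (i, j) \<Rightarrow> real (N i j \<omega>) | Inr (i, j, k) \<Rightarrow> W i j k \<omega>)"

definition II :: "nat \<Rightarrow> nat \<Rightarrow> ((nat \<times> nat) + (nat \<times> nat \<times> nat)) set" where
  "II n d = ({Inl (i, j) | i j. i < n \<and> j < d} \<union> {Inr (i, j, k) | i j k. i < n \<and> j < d})"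

definition KK :: "nat \<Rightarrow> nat \<Rightarrow> ((nat \<times> nat) + (nat \<times> nat \<times> nat)) set" where
  "KK i j = insert (Inl (i, j)) (range (\<lambda>k. Inr (i, j, k)))"

lemma KK_sub: "i < n \<Longrightarrow> j < d \<Longrightarrow> KK i j \<subseteq> II n d"
  by (auto simp: KK_def II_def)

lemma (in prob_space) indep_Y:
  fixes A :: "nat \<Rightarrow> nat \<Rightarrow> real" and N :: "nat \<Rightarrow> nat \<Rightarrow> 'a \<Rightarrow> nat" and W :: "nat \<Rightarrow> nat \<Rightarrow> nat \<Rightarrow> 'a \<Rightarrow> real"
  assumes ind: "indep_vars (\<lambda>_. borel) (XX N W) (II n d)"
    and E: "E \<subseteq> {..<n}" and j: "j < d"
  shows "indep_vars (\<lambda>_. borel) (\<lambda>i \<omega>. ennreal (exp (t * (Ytilde A N W i j \<omega> - lam * A i j)))) E"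
proof -
  have r: "indep_vars (\<lambda>i. PiM (KK i j) (\<lambda>_. borel :: real measure)) (\<lambda>i \<omega>. restrict (\<lambda>x. XX N W x \<omega>) (KK i j)) E"
    by (rule indep_vars_restrict[OF ind]) (use E j in \<open>auto simp: disjoint_family_on_def KK_def II_def\<close>)
  define f where "f i m y = (if m = 0 then 0 else (\<Sum>k<m. A i j + y (Inr (i, j, k))) / real (m::nat))" for i m and y :: "(nat \<times> nat) + (nat \<times> nat \<times> nat) \<Rightarrow> real"
  define F where "F i y = ennreal (exp (t * (f i (nat \<lfloor>y (Inl (i, j))\<rfloor>) y - lam * A i j)))" for i y
  have Fm: "F i \<in> measurable (PiM (KK i j) (\<lambda>_. borel :: real measure)) borel" for i
  proof -
    have fm: "f i m \<in> borel_measurable (PiM (KK i j) (\<lambda>_. borel :: real measure))" for m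
    proof -
      have [measurable]: "(\<lambda>y. y (Inr (i, j, k))) \<in> borel_measurable (PiM (KK i j) (\<lambda>_. borel :: real measure))" for k
        by (rule measurable_component_singleton) (simp add: KK_def)
      show ?thesis unfolding f_def by measurable
    qed
    have gm: "(\<lambda>y. nat \<lfloor>y (Inl (i, j))\<rfloor>) \<in> measurable (PiM (KK i j) (\<lambda>_. borel :: real measure)) (count_space UNIV)"
    proof -
      have c1: "(\<lambda>y. y (Inl (i, j))) \<in> borel_measurable (PiM (KK i j) (\<lambda>_. borel :: real measure))"
        by (rule measurable_component_singleton) (simp add: KK_def)
      have c2: "(\<lambda>y. \<lfloor>y (Inl (i, j))\<rfloor>) \<in> measurable (PiM (KK i j) (\<lambda>_. borel :: real measure)) (count_space UNIV)"
        using measurable_compose[OF c1 measurable_real_floor] unfolding comp_def by assumption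
      show ?thesis using measurable_compose[OF c2, of nat "count_space UNIV"] by (simp add: comp_def)
    qed
    have "(\<lambda>y. f i (nat \<lfloor>y (Inl (i, j))\<rfloor>) y) \<in> borel_measurable (PiM (KK i j) (\<lambda>_. borel :: real measure))"
      by (rule measurable_compose_countable'[OF fm gm]) auto
    then show ?thesis unfolding F_def by measurable
  qed
  have c: "indep_vars (\<lambda>_. borel) (\<lambda>i \<omega>. F i (restrict (\<lambda>x. XX N W x \<omega>) (KK i j))) E"
    by (rule indep_vars_compose2[OF r Fm])
  show ?thesis
  proof (rule indep_vars_cong[THEN iffD1, OF refl _ refl c])
    fix i assume "i \<in> E"
    show "(\<lambda>\<omega>. F i (restrict (\<lambda>x. XX N W x \<omega>) (KK i j))) = (\<lambda>\<omega>. ennreal (exp (t * (Ytilde A N W i j \<omega> - lam * A i j))))"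
      by (auto simp: F_def f_def KK_def XX_def Ytilde_def)
  qed
qed

lemma Ytilde_meas:
  assumes Nm: "N i j \<in> measurable M (count_space UNIV)" and Wm: "\<And>k. W i j k \<in> borel_measurable M"
  shows "Ytilde A N W i j \<in> borel_measurable M"
proof -
  define f where "f m \<omega> = (if m = 0 then 0 else (\<Sum>k<m. A i j + W i j k \<omega>) / real (m::nat))" for m \<omega>
  note [measurable] = Wm
  have fm: "f m \<in> borel_measurable M" for m unfolding f_def by measurable
  have "(\<lambda>\<omega>. f (N i j \<omega>) \<omega>) \<in> borel_measurable M"
    by (rule measurable_compose_countable'[OF fm Nm]) auto
  moreover have "(\<lambda>\<omega>. f (N i j \<omega>) \<omega>) = Ytilde A N W i j" by (auto simp: f_def Ytilde_def)
  ultimately show ?thesis by simp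
qed

lemma card_sqrt: assumes "0 < k" "0 \<le> lam" shows "k * sqrt (lam / k) = sqrt (lam * k)"
proof -
  have "sqrt (lam * k) = sqrt (lam / k * k\<^sup>2)" using assms by (simp add: power2_eq_square)
  also have "\<dots> = sqrt (lam / k) * sqrt (k\<^sup>2)" by (rule real_sqrt_mult)
  also have "sqrt (k\<^sup>2) = k" using assms by simp
  finally show ?thesis by simp
qed

lemma (in prob_space) chernoff_block:
  fixes A :: "nat \<Rightarrow> nat \<Rightarrow> real" and N :: "nat \<Rightarrow> nat \<Rightarrow> 'a \<Rightarrow> nat" and W :: "nat \<Rightarrow> nat \<Rightarrow> nat \<Rightarrow> 'a \<Rightarrow> real"
  assumes ind: "indep_vars (\<lambda>_. borel) (XX N W) (II n d)"
    and E: "E \<subseteq> {..<n}" "E \<noteq> {}" and j: "j < d"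
    and Nm: "\<And>i. i \<in> E \<Longrightarrow> N i j \<in> measurable M (count_space UNIV)"
    and Np: "\<And>i. i \<in> E \<Longrightarrow> distr M (count_space UNIV) (N i j) = measure_pmf (poisson_pmf \<mu>)"
    and Wm: "\<And>i k. i \<in> E \<Longrightarrow> W i j k \<in> borel_measurable M"
    and Wint: "\<And>i k u. i \<in> E \<Longrightarrow> integrable M (\<lambda>\<omega>. exp (u * W i j k \<omega>))"
    and Wsub: "\<And>i k u. i \<in> E \<Longrightarrow> expectation (\<lambda>\<omega>. exp (u * W i j k \<omega>)) \<le> exp (u\<^sup>2 * \<sigma>\<^sup>2 / 2)"
    and sig: "0 < \<sigma>" and mu: "0 < \<mu>" and a: "\<And>i. i \<in> E \<Longrightarrow> 0 \<le> A i j \<and> A i j \<le> 1"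
    and s: "s = max 1 \<sigma>" and L: "0 < L" and rho: "\<rho> = s * exp 1 * sqrt (8 * L)"
    and h: "0 < h" "h \<le> 1" and big: "(1 - exp (- \<mu>)) * real (card E) > 4 * \<rho>\<^sup>2 / h\<^sup>2"
    and c: "c = 1 \<or> c = -1"
  shows "emeasure M {\<omega>\<in>space M. real (card E) * (\<rho> * sqrt ((1 - exp (- \<mu>)) / real (card E)))
            \<le> c * (\<Sum>i\<in>E. Ytilde A N W i j \<omega> - (1 - exp (- \<mu>)) * A i j)} \<le> ennreal (exp (- L))"
proof -
  define lam where "lam = 1 - exp (- \<mu>)"
  have lam: "0 < lam" "lam \<le> 1" using mu by (auto simp: lam_def)
  have finE: "finite E" using E finite_subset by blast
  have cE: "0 < real (card E)" using finE E by (simp add: card_gt_0_iff)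
  define m where "m = lam * real (card E)"
  have m0: "0 < m" using lam cE by (simp add: m_def)
  have s1: "1 \<le> s" using s by simp
  have rho0: "0 < \<rho>" using rho s1 L by (simp add: rho)
  have sm: "2 * \<rho> / h < sqrt m"
  proof -
    have "sqrt (4 * \<rho>\<^sup>2 / h\<^sup>2) < sqrt m" using big by (simp add: m_def lam_def)
    moreover have "sqrt (4 * \<rho>\<^sup>2 / h\<^sup>2) = 2 * \<rho> / h" using rho0 h
      by (simp add: real_sqrt_divide real_sqrt_mult)
    ultimately show ?thesis by simp
  qed
  have sm2: "2 * \<rho> \<le> sqrt m"
  proof -
    have "2 * \<rho> \<le> 2 * \<rho> / h" using rho0 h by (simp add: divide_simps)
    then show ?thesis using sm by simp
  qed
  have sqm0: "0 < sqrt m" using m0 by simp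
  define \<tau> where "\<tau> = \<rho> / (4 * s\<^sup>2 * sqrt m)"
  have tau0: "0 < \<tau>" using rho0 s1 sqm0 by (simp add: \<tau>_def)
  define t where "t = c * \<tau>"
  have tabs: "\<bar>t\<bar> = \<tau>" using c tau0 by (auto simp: t_def)
  have tb: "\<bar>t\<bar> \<le> 1 / (4 * s)"
  proof -
    have "\<rho> \<le> s * sqrt m" using sm2 rho0 s1 sqm0 by (smt (verit) mult_le_cancel_right1)
    then have "\<rho> / (4 * s\<^sup>2 * sqrt m) \<le> (s * sqrt m) / (4 * s\<^sup>2 * sqrt m)"
      using s1 sqm0 by (intro divide_right_mono) auto
    also have "\<dots> = 1 / (4 * s)" using s1 sqm0 by (simp add: power2_eq_square field_simps)
    finally show ?thesis using tabs by (simp add: \<tau>_def)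
  qed
  define \<theta> where "\<theta> = real (card E) * (\<rho> * sqrt (lam / real (card E)))"
  have theta: "\<theta> = \<rho> * sqrt m" unfolding \<theta>_def m_def using card_sqrt[OF cE, of lam] lam
    by (simp add: mult_ac)
  define Z where "Z i \<omega> = ennreal (exp (t * (Ytilde A N W i j \<omega> - lam * A i j)))" for i \<omega>
  have Ym[measurable]: "Ytilde A N W i j \<in> borel_measurable M" if "i \<in> E" for i
    using Ytilde_meas[where N=N and W=W and i=i and j=j, OF Nm[OF that] Wm[OF that]] .
  have indZ: "indep_vars (\<lambda>_. borel) Z E"
    unfolding Z_def by (rule indep_Y[OF ind E(1) j])
  let ?S = "{\<omega>\<in>space M. \<theta> \<le> c * (\<Sum>i\<in>E. Ytilde A N W i j \<omega> - lam * A i j)}"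
  have Sm: "?S \<in> sets M" using finE by measurable
  have "emeasure M ?S = (\<integral>\<^sup>+\<omega>. indicator ?S \<omega> \<partial>M)" using Sm by simp
  also have "\<dots> \<le> (\<integral>\<^sup>+\<omega>. ennreal (exp (- \<tau> * \<theta>)) * (\<Prod>i\<in>E. Z i \<omega>) \<partial>M)"
  proof (rule nn_integral_mono)
    fix \<omega> assume "\<omega> \<in> space M"
    have eq: "ennreal (exp (- \<tau> * \<theta>)) * (\<Prod>i\<in>E. Z i \<omega>) = ennreal (exp (t * (\<Sum>i\<in>E. Ytilde A N W i j \<omega> - lam * A i j) - \<tau> * \<theta>))"
    proof -
      have "exp (t * (\<Sum>i\<in>E. Ytilde A N W i j \<omega> - lam * A i j) - \<tau> * \<theta>)
          = exp (- \<tau> * \<theta>) * (\<Prod>i\<in>E. exp (t * (Ytilde A N W i j \<omega> - lam * A i j)))"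
      proof -
        have e1: "t * (\<Sum>i\<in>E. Ytilde A N W i j \<omega> - lam * A i j) = (\<Sum>i\<in>E. t * (Ytilde A N W i j \<omega> - lam * A i j))"
          by (simp add: sum_distrib_left)
        have "exp (t * (\<Sum>i\<in>E. Ytilde A N W i j \<omega> - lam * A i j) - \<tau> * \<theta>)
            = exp (- \<tau> * \<theta>) * exp (t * (\<Sum>i\<in>E. Ytilde A N W i j \<omega> - lam * A i j))"
          by (simp add: exp_add[symmetric])
        also have "exp (t * (\<Sum>i\<in>E. Ytilde A N W i j \<omega> - lam * A i j)) = (\<Prod>i\<in>E. exp (t * (Ytilde A N W i j \<omega> - lam * A i j)))"
          unfolding e1 by (rule exp_sum[OF finE])
        finally show ?thesis .
      qed
      then show ?thesis by (simp add: Z_def prod_ennreal ennreal_mult' prod_nonneg)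
    qed
    show "indicator ?S \<omega> \<le> ennreal (exp (- \<tau> * \<theta>)) * (\<Prod>i\<in>E. Z i \<omega>)"
    proof (cases "\<omega> \<in> ?S")
      case True
      then have "\<tau> * \<theta> \<le> \<tau> * (c * (\<Sum>i\<in>E. Ytilde A N W i j \<omega> - lam * A i j))"
        using tau0 by (intro mult_left_mono) auto
      then have "0 \<le> t * (\<Sum>i\<in>E. Ytilde A N W i j \<omega> - lam * A i j) - \<tau> * \<theta>"
        by (simp add: t_def mult_ac)
      then have "1 \<le> exp (t * (\<Sum>i\<in>E. Ytilde A N W i j \<omega> - lam * A i j) - \<tau> * \<theta>)" by simp
      then show ?thesis using True unfolding eq by (simp add: ennreal_leI[of 1, simplified])
    qed simp
  qed
  also have "\<dots> = ennreal (exp (- \<tau> * \<theta>)) * (\<integral>\<^sup>+\<omega>. (\<Prod>i\<in>E. Z i \<omega>) \<partial>M)"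
    by (rule nn_integral_cmult) (unfold Z_def, measurable)
  also have "(\<integral>\<^sup>+\<omega>. (\<Prod>i\<in>E. Z i \<omega>) \<partial>M) = (\<Prod>i\<in>E. \<integral>\<^sup>+\<omega>. Z i \<omega> \<partial>M)"
    by (rule indep_vars_nn_integral[OF finE indZ]) simp
  also have "\<dots> \<le> (\<Prod>i\<in>E. ennreal (exp (2 * lam * s\<^sup>2 * t\<^sup>2)))"
  proof (rule prod_mono_ennreal)
    fix i assume i: "i \<in> E"
    have ii: "i < n" using i E by auto
    have indi: "indep_vars (\<lambda>_. borel) (XX N W) (insert (Inl (i, j)) (range (\<lambda>k. Inr (i, j, k))))"
      using indep_vars_subset[OF ind KK_sub[OF ii j]] by (simp add: KK_def)
    show "(\<integral>\<^sup>+\<omega>. Z i \<omega> \<partial>M) \<le> ennreal (exp (2 * lam * s\<^sup>2 * t\<^sup>2))"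
      unfolding Z_def lam_def
      by (rule mgf_Ytilde[where N=N and W=W and i=i and j=j and A=A and X="XX N W" and inl="Inl (i,j)" and inr="\<lambda>k. Inr (i,j,k)" and \<sigma>=\<sigma> and \<mu>=\<mu>, OF Nm[OF i] Np[OF i] Wm[OF i] Wint[OF i] Wsub[OF i] indi _ _ _ _ sig mu _ _ s tb])
         (use a[OF i] in \<open>auto simp: inj_def XX_def\<close>)
  qed
  also have "(\<Prod>i\<in>E. ennreal (exp (2 * lam * s\<^sup>2 * t\<^sup>2))) = ennreal (exp (real (card E) * (2 * lam * s\<^sup>2 * t\<^sup>2)))"
    by (simp add: prod_ennreal exp_of_nat_mult ennreal_power)
  finally have F: "emeasure M ?S \<le> ennreal (exp (- \<tau> * \<theta>)) * ennreal (exp (real (card E) * (2 * lam * s\<^sup>2 * t\<^sup>2)))"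
    by (simp add: mult_left_mono)
  have ex: "- \<tau> * \<theta> + real (card E) * (2 * lam * s\<^sup>2 * t\<^sup>2) = - (\<rho>\<^sup>2 / (8 * s\<^sup>2))"
  proof -
    have t2: "t\<^sup>2 = \<tau>\<^sup>2" using tabs by (metis power2_abs)
    have "real (card E) * (2 * lam * s\<^sup>2 * t\<^sup>2) = 2 * m * s\<^sup>2 * \<tau>\<^sup>2" by (simp add: t2 m_def)
    moreover have "\<tau> * \<theta> = \<rho>\<^sup>2 / (4 * s\<^sup>2)" using sqm0 s1 by (simp add: theta \<tau>_def power2_eq_square field_simps)
    moreover have "2 * m * s\<^sup>2 * \<tau>\<^sup>2 = \<rho>\<^sup>2 / (8 * s\<^sup>2)" using sqm0 s1 m0
      by (simp add: \<tau>_def power2_eq_square field_simps)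
    ultimately show ?thesis by simp
  qed
  have rho2: "\<rho>\<^sup>2 / (8 * s\<^sup>2) = exp 1 ^ 2 * L"
    using s1 L by (simp add: rho power_mult_distrib)
  have "exp 1 ^ 2 * L \<ge> L" using L by (simp add: power2_eq_square) (smt (verit) exp_ge_add_one_self mult_le_cancel_right1 one_le_power)
  then have "- \<tau> * \<theta> + real (card E) * (2 * lam * s\<^sup>2 * t\<^sup>2) \<le> - L" using ex rho2 by simp
  then have "ennreal (exp (- \<tau> * \<theta>)) * ennreal (exp (real (card E) * (2 * lam * s\<^sup>2 * t\<^sup>2))) \<le> ennreal (exp (- L))"
    by (simp add: ennreal_mult'[symmetric] exp_add[symmetric] del: ennreal_mult')
  with F show ?thesis by (simp add: \<theta>_def lam_def)
qed




lemma biso_mono: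
  assumes perm: "\<pi> permutes {..<n}" "\<eta> permutes {..<d}" and Mb: "M \<in> C_Biso n d \<pi> \<eta>"
    and i: "i < n" "i' < n" and j: "j < d" and lt: "\<pi> i < \<pi> i'"
  shows "M i' j \<le> M i j"
proof -
  have bi: "bi_isotonic n d (\<lambda>a b. M (inv \<pi> a) (inv \<eta> b))" using Mb by (simp add: C_Biso_def)
  have "\<pi> i' < n" using permutes_in_image[OF perm(1), of i'] i by simp
  moreover have "\<eta> j < d" using permutes_in_image[OF perm(2), of j] j by simp
  ultimately have "M (inv \<pi> (\<pi> i')) (inv \<eta> (\<eta> j)) \<le> M (inv \<pi> (\<pi> i)) (inv \<eta> (\<eta> j))"
    using bi lt unfolding bi_isotonic_def by (meson less_imp_le)
  then show ?thesis by (simp add: permutes_inverses[OF perm(1)] permutes_inverses[OF perm(2)])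
qed

lemma three_card:
  fixes C :: "nat set"
  assumes fin: "finite C" and no: "\<And>a b c. a \<in> C \<Longrightarrow> b \<in> C \<Longrightarrow> c \<in> C \<Longrightarrow> a < b \<Longrightarrow> b < c \<Longrightarrow> False"
  shows "card C \<le> 2"
proof (rule ccontr)
  assume "\<not> card C \<le> 2"
  then have c3: "3 \<le> card C" by simp
  then have ne: "C \<noteq> {}" by auto
  define a where "a = Min C"
  have a: "a \<in> C" "\<And>x. x \<in> C \<Longrightarrow> a \<le> x" using fin ne by (auto simp: a_def)
  define C1 where "C1 = C - {a}"
  have c1: "2 \<le> card C1" using c3 a fin by (simp add: C1_def card_Diff_singleton)
  then have ne1: "C1 \<noteq> {}" by auto
  have fin1: "finite C1" using fin by (simp add: C1_def)
  define b where "b = Min C1"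
  have b: "b \<in> C1" "\<And>x. x \<in> C1 \<Longrightarrow> b \<le> x" using fin1 ne1 by (auto simp: b_def)
  define C2 where "C2 = C1 - {b}"
  have "1 \<le> card C2" using c1 b fin1 by (simp add: C2_def card_Diff_singleton)
  then obtain c where c: "c \<in> C2" by (metis card.empty ex_in_conv not_one_le_zero)
  have bC: "b \<in> C" "b \<noteq> a" using b(1) by (auto simp: C1_def)
  have ab: "a < b" using a(2)[OF bC(1)] bC(2) by simp
  have cC: "c \<in> C1" "c \<noteq> b" using c by (auto simp: C2_def)
  have bc: "b < c" using b(2)[OF cC(1)] cC(2) by simp
  have "c \<in> C" using cC(1) by (simp add: C1_def)
  show False by (rule no[OF a(1) bC(1) \<open>c \<in> C\<close> ab bc])
qed

lemma dev_half:
  fixes lam c \<rho> h :: real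
  assumes "0 < lam" "0 < c" "0 \<le> \<rho>" "0 < h" "lam * c > 4 * \<rho>\<^sup>2 / h\<^sup>2"
  shows "2 * (\<rho> * sqrt (lam / c)) \<le> lam * h"
proof -
  have "(2 * (\<rho> * sqrt (lam / c)))\<^sup>2 = 4 * \<rho>\<^sup>2 * lam / c"
    using assms by (simp add: power_mult_distrib)
  also have "\<dots> \<le> (lam * h)\<^sup>2"
  proof -
    have "4 * \<rho>\<^sup>2 < lam * c * h\<^sup>2" using assms by (simp add: field_simps)
    then have "4 * \<rho>\<^sup>2 * lam \<le> lam * c * h\<^sup>2 * lam" using assms by (intro mult_right_mono) auto
    moreover have "(lam * h)\<^sup>2 * c = lam * c * h\<^sup>2 * lam" by (simp add: power2_eq_square algebra_simps)
    ultimately have "4 * \<rho>\<^sup>2 * lam \<le> (lam * h)\<^sup>2 * c" by (simp only:)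
    then show ?thesis using assms(2) by (simp add: pos_divide_le_eq)
  qed
  finally have "(2 * (\<rho> * sqrt (lam / c)))\<^sup>2 \<le> (lam * h)\<^sup>2" .
  moreover have "0 \<le> lam * h" using assms by simp
  ultimately show ?thesis by (rule power2_le_imp_le)
qed

lemma card_as_sum:
  assumes "A \<subseteq> B" "finite B"
  shows "real (card A) = (\<Sum>j\<in>B. if j \<in> A then 1 else 0)"
proof -
  have "(\<Sum>j\<in>B. if j \<in> A then 1 else (0::real)) = sum (\<lambda>_. 1) (B \<inter> A)"
    using assms by (rule_tac sum.inter_restrict[symmetric]) auto
  also have "B \<inter> A = A" using assms by auto
  finally show ?thesis by simp
qed




lemma deterministic:
  fixes M :: "nat \<Rightarrow> nat \<Rightarrow> real" and Y :: "nat \<Rightarrow> nat \<Rightarrow> 'a \<Rightarrow> real"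
  assumes perm: "\<pi> permutes {..<n}" "\<eta> permutes {..<d}" and Mbiso: "M \<in> C_Biso n d \<pi> \<eta>"
    and lam: "0 < lam" and rho: "0 \<le> \<rho>" and h: "0 < h"
    and part_nonempty: "\<And>s. s < r \<Longrightarrow> E s \<noteq> {}"
    and part_union: "(\<Union>s<r. E s) = {..<n}"
    and cond_i: "\<And>s. s < r \<Longrightarrow> v s \<Longrightarrow> lam * real (card (E s)) > 4 * \<rho>\<^sup>2 / h\<^sup>2"
    and cond_ii: "\<And>s s' i i'. s < s' \<Longrightarrow> s' < r \<Longrightarrow> v s \<Longrightarrow> v s' \<Longrightarrow>
                  i \<in> E s \<Longrightarrow> i' \<in> E s' \<Longrightarrow> \<pi> i < \<pi> i'"
    and good: "\<And>t j. t < r \<Longrightarrow> v t \<Longrightarrow> j < d \<Longrightarrow>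
        \<bar>\<Sum>i\<in>E t. Y i j \<omega> - lam * M i j\<bar> < real (card (E t)) * (\<rho> * sqrt (lam / real (card (E t))))"
  shows "(\<Sum>s\<in>{s. s < r \<and> v s}. card (envelope d r v E Y lam \<rho> p h s \<omega>)) \<le> 3 * d \<and>
         (\<forall>s. s < r \<and> v s \<longrightarrow> Qstar d M p h (E s) \<subseteq> envelope d r v E Y lam \<rho> p h s \<omega>)"
proof -
  define T where "T = {s. s < r \<and> v s}"
  define env where "env s = envelope d r v E Y lam \<rho> p h s \<omega>" for s
  define pr where "pr s = Max {t. t < s \<and> v t}" for s
  define su where "su s = Min {t. s < t \<and> t < r \<and> v t}" for s
  define dev where "dev t = \<rho> * sqrt (lam / real (card (E t)))" for t
  define SM where "SM t j = (\<Sum>i\<in>E t. M i j)" for t j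
  have finT: "finite T" unfolding T_def by simp
  have Esub: "E t \<subseteq> {..<n}" if "t < r" for t using part_union that by blast
  have finE: "finite (E t)" if "t < r" for t using Esub[OF that] finite_subset by blast
  have cE: "0 < real (card (E t))" if "t < r" for t using finE[OF that] part_nonempty[OF that] by (simp add: card_gt_0_iff)
  have half: "2 * dev t \<le> lam * h" if "t \<in> T" for t
    using dev_half[OF lam cE rho h cond_i] that by (auto simp: T_def dev_def)
  have P1: "pr s \<in> T \<and> pr s < s \<and> (\<forall>t\<in>T. t < s \<longrightarrow> t \<le> pr s)" if "s \<in> T" "s \<noteq> Min T" for s
  proof -
    have ne: "T \<noteq> {}" using that by auto
    have "Min T \<le> s" using that finT by simp
    then have "Min T < s" using that by simp
    moreover have "Min T \<in> T" using finT ne by simp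
    ultimately have "Min T \<in> {t. t < s \<and> v t}" by (simp add: T_def)
    then have ne2: "{t. t < s \<and> v t} \<noteq> {}" by auto
    have fin2: "finite {t. t < s \<and> v t}" by simp
    have "pr s \<in> {t. t < s \<and> v t}" unfolding pr_def using Max_in[OF fin2 ne2] .
    then show ?thesis using that Max_ge[OF fin2] by (auto simp: T_def pr_def)
  qed
  have P2: "su s \<in> T \<and> s < su s \<and> (\<forall>t\<in>T. s < t \<longrightarrow> su s \<le> t)" if "s \<in> T" "s \<noteq> Max T" for s
  proof -
    have ne: "T \<noteq> {}" using that by auto
    have "s \<le> Max T" using that finT by simp
    then have "s < Max T" using that by simp
    moreover have "Max T \<in> T" using finT ne by simp
    ultimately have "Max T \<in> {t. s < t \<and> t < r \<and> v t}" by (simp add: T_def)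
    then have ne2: "{t. s < t \<and> t < r \<and> v t} \<noteq> {}" by auto
    have fin2: "finite {t. s < t \<and> t < r \<and> v t}" by simp
    have "su s \<in> {t. s < t \<and> t < r \<and> v t}" unfolding su_def using Min_in[OF fin2 ne2] .
    then show ?thesis using that Min_le[OF fin2] by (auto simp: T_def su_def)
  qed
  have mem: "j \<in> env s \<longleftrightarrow> j < d \<and> (s = Min T \<or> lam * (p + h) - dev (pr s) \<le> ybar Y (E (pr s)) j \<omega>)
                 \<and> (s = Max T \<or> ybar Y (E (su s)) j \<omega> \<le> lam * (p - h) + dev (su s))" for s j
    by (auto simp: env_def envelope_def Let_def T_def pr_def su_def dev_def)
  have ylo: "lam * SM t j / real (card (E t)) - dev t < ybar Y (E t) j \<omega>"
    and yhi: "ybar Y (E t) j \<omega> < lam * SM t j / real (card (E t)) + dev t" if "t \<in> T" "j < d" for t j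
  proof -
    have tr: "t < r" "v t" using that by (auto simp: T_def)
    define c where "c = real (card (E t))"
    have c0: "0 < c" using cE[OF tr(1)] by (simp add: c_def)
    have g: "\<bar>(\<Sum>i\<in>E t. Y i j \<omega>) - lam * SM t j\<bar> < c * dev t"
      using good[OF tr that(2)] by (simp add: c_def dev_def SM_def sum_subtractf sum_distrib_left)
    have yb: "ybar Y (E t) j \<omega> = (\<Sum>i\<in>E t. Y i j \<omega>) / c" by (simp add: ybar_def c_def)
    have "\<bar>ybar Y (E t) j \<omega> - lam * SM t j / c\<bar> = \<bar>(\<Sum>i\<in>E t. Y i j \<omega>) - lam * SM t j\<bar> / c"
      using c0 by (simp add: yb diff_divide_distrib[symmetric])
    also have "\<dots> < dev t" using g c0 by (simp add: divide_less_eq mult.commute)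
    finally have "\<bar>ybar Y (E t) j \<omega> - lam * SM t j / c\<bar> < dev t" .
    then show "lam * SM t j / real (card (E t)) - dev t < ybar Y (E t) j \<omega>"
      and "ybar Y (E t) j \<omega> < lam * SM t j / real (card (E t)) + dev t" by (auto simp: c_def)
  qed
  have ord: "M i' j \<le> M i j" if "t \<in> T" "t' \<in> T" "t < t'" "i \<in> E t" "i' \<in> E t'" "j < d" for t t' i i' j
  proof -
    have "t < r" "t' < r" using that by (auto simp: T_def)
    then have "i < n" "i' < n" using that Esub by blast+
    moreover have "\<pi> i < \<pi> i'" using cond_ii[of t t' i i'] that by (auto simp: T_def)
    ultimately show ?thesis using biso_mono[OF perm Mbiso _ _ \<open>j < d\<close>] by blast
  qed
  have incl: "Qstar d M p h (E s) \<subseteq> env s" if sT: "s \<in> T" for s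
  proof
    fix j assume jQ: "j \<in> Qstar d M p h (E s)"
    have sr: "s < r" using sT by (simp add: T_def)
    have jd: "j < d" and mx: "p + h \<le> Max ((\<lambda>i. M i j) ` E s)" and mn: "Min ((\<lambda>i. M i j) ` E s) \<le> p - h"
      using jQ by (auto simp: Qstar_def)
    have fimg: "finite ((\<lambda>i. M i j) ` E s)" "(\<lambda>i. M i j) ` E s \<noteq> {}" using finE[OF sr] part_nonempty[OF sr] by auto
    obtain i0 where i0: "i0 \<in> E s" "M i0 j = Max ((\<lambda>i. M i j) ` E s)" using Max_in[OF fimg] by auto
    obtain i1 where i1: "i1 \<in> E s" "M i1 j = Min ((\<lambda>i. M i j) ` E s)" using Min_in[OF fimg] by auto
    have low: "s = Min T \<or> lam * (p + h) - dev (pr s) \<le> ybar Y (E (pr s)) j \<omega>"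
    proof (cases "s = Min T")
      case False
      note P = P1[OF sT False]
      let ?u = "pr s"
      have ur: "?u < r" using P by (simp add: T_def)
      have "\<forall>i\<in>E ?u. p + h \<le> M i j" using ord[OF _ sT _ _ i0(1) jd] P mx i0(2) by force
      then have "real (card (E ?u)) * (p + h) \<le> SM ?u j" unfolding SM_def by (auto intro!: sum_bounded_below)
      then have "lam * (real (card (E ?u)) * (p + h)) \<le> lam * SM ?u j" using lam by (intro mult_left_mono) auto
      then have "lam * (p + h) \<le> lam * SM ?u j / real (card (E ?u))"
        using cE[OF ur] by (simp add: pos_le_divide_eq mult_ac)
      then show ?thesis using ylo[OF _ jd, of ?u] P by simp
    qed simp
    have up: "s = Max T \<or> ybar Y (E (su s)) j \<omega> \<le> lam * (p - h) + dev (su s)"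
    proof (cases "s = Max T")
      case False
      note P = P2[OF sT False]
      let ?u = "su s"
      have ur: "?u < r" using P by (simp add: T_def)
      have "\<forall>i\<in>E ?u. M i j \<le> p - h" using ord[OF sT _ _ i1(1) _ jd] P mn i1(2) by force
      then have "SM ?u j \<le> real (card (E ?u)) * (p - h)" unfolding SM_def by (auto intro!: sum_bounded_above)
      then have "lam * SM ?u j \<le> lam * (real (card (E ?u)) * (p - h))" using lam by (intro mult_left_mono) auto
      then have "lam * SM ?u j / real (card (E ?u)) \<le> lam * (p - h)"
        using cE[OF ur] by (simp add: pos_divide_le_eq mult_ac)
      then show ?thesis using yhi[OF _ jd, of ?u] P by simp
    qed simp
    show "j \<in> env s" using mem jd low up by simp
  qed
  have envsub: "env s \<subseteq> {..<d}" for s using mem by auto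
  have C2: "card {s\<in>T. j \<in> env s} \<le> 2" if jd: "j < d" for j
  proof (rule three_card)
    show "finite {s\<in>T. j \<in> env s}" using finT by simp
  next
    fix a b c assume abc: "a \<in> {s\<in>T. j \<in> env s}" "b \<in> {s\<in>T. j \<in> env s}" "c \<in> {s\<in>T. j \<in> env s}" "a < b" "b < c"
    have aT: "a \<in> T" and bT: "b \<in> T" and cT: "c \<in> T" using abc by auto
    have aM: "a \<noteq> Max T" using bT abc(4) finT by (metis Max_ge leD)
    have cM: "c \<noteq> Min T" using bT abc(5) finT by (metis Min_le leD)
    note Pa = P2[OF aT aM] and Pc = P1[OF cT cM]
    define u where "u = su a"
    define w where "w = pr c"
    have uT: "u \<in> T" and wT: "w \<in> T" using Pa Pc by (auto simp: u_def w_def)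
    have uw: "u \<le> w" using Pa Pc bT abc(4,5) unfolding u_def w_def by (meson le_trans less_imp_le)
    have yu: "ybar Y (E u) j \<omega> \<le> lam * (p - h) + dev u" using abc(1) mem aM by (auto simp: u_def)
    have yw: "lam * (p + h) - dev w \<le> ybar Y (E w) j \<omega>" using abc(3) mem cM by (auto simp: w_def)
    have ur: "u < r" and wr: "w < r" using uT wT by (auto simp: T_def)
    have su_: "SM u j < real (card (E u)) * p"
    proof -
      have "lam * SM u j / real (card (E u)) < lam * p"
        using ylo[OF uT jd] yu half[OF uT] lam h by (simp add: algebra_simps)
      then have "SM u j / real (card (E u)) < p" using lam by (simp add: mult_less_cancel_left_pos times_divide_eq_right[symmetric] del: times_divide_eq_right)
      then show ?thesis using cE[OF ur] by (simp add: divide_less_eq mult.commute)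
    qed
    have sw_: "real (card (E w)) * p < SM w j"
    proof -
      have "lam * p < lam * SM w j / real (card (E w))"
        using yhi[OF wT jd] yw half[OF wT] lam h by (simp add: algebra_simps)
      then have "p < SM w j / real (card (E w))" using lam by (simp add: mult_less_cancel_left_pos times_divide_eq_right[symmetric] del: times_divide_eq_right)
      then show ?thesis using cE[OF wr] by (simp add: less_divide_eq mult.commute)
    qed
    show False
    proof (cases "u = w")
      case True then show False using su_ sw_ by simp
    next
      case False
      then have uw': "u < w" using uw by simp
      have "\<exists>i\<in>E u. M i j < p"
      proof (rule ccontr)
        assume "\<not> (\<exists>i\<in>E u. M i j < p)"
        then have "\<forall>i\<in>E u. p \<le> M i j" by (auto simp: not_less)
        then have "real (card (E u)) * p \<le> SM u j" unfolding SM_def by (auto intro!: sum_bounded_below)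
        then show False using su_ by simp
      qed
      then obtain i where i: "i \<in> E u" "M i j < p" by blast
      have "\<exists>i'\<in>E w. p < M i' j"
      proof (rule ccontr)
        assume "\<not> (\<exists>i'\<in>E w. p < M i' j)"
        then have "\<forall>i\<in>E w. M i j \<le> p" by (auto simp: not_less)
        then have "SM w j \<le> real (card (E w)) * p" unfolding SM_def by (auto intro!: sum_bounded_above)
        then show False using sw_ by simp
      qed
      then obtain i' where i': "i' \<in> E w" "p < M i' j" by blast
      have "M i' j \<le> M i j" by (rule ord[OF uT wT uw' i(1) i'(1) jd])
      then show False using i i' by simp
    qed
  qed
  have "real (\<Sum>s\<in>T. card (env s)) = (\<Sum>s\<in>T. \<Sum>j<d. if j \<in> env s then 1 else 0)"
    by (simp only: of_nat_sum) (intro sum.cong refl card_as_sum envsub, simp)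
  also have "\<dots> = (\<Sum>j<d. \<Sum>s\<in>T. if j \<in> env s then 1 else 0)" by (rule sum.swap)
  also have "\<dots> = (\<Sum>j<d. real (card {s\<in>T. j \<in> env s}))"
  proof (rule sum.cong[OF refl])
    fix j
    have "real (card {s\<in>T. j \<in> env s}) = (\<Sum>s\<in>T. if s \<in> {s\<in>T. j \<in> env s} then 1 else 0)"
      by (rule card_as_sum) (use finT in auto)
    then show "(\<Sum>s\<in>T. if j \<in> env s then 1 else 0) = real (card {s\<in>T. j \<in> env s})" by simp
  qed
  also have "\<dots> \<le> (\<Sum>j<d. 2)" by (intro sum_mono) (use C2 in auto)
  also have "\<dots> \<le> real (3 * d)" by simp
  finally have cnt: "(\<Sum>s\<in>T. card (env s)) \<le> 3 * d" by linarith
  show ?thesis using cnt incl by (auto simp: T_def env_def)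
qed




lemma target_meas:
  fixes P :: "'a measure" and Y :: "nat \<Rightarrow> nat \<Rightarrow> 'a \<Rightarrow> real"
  assumes Ym: "\<And>i j. i < n \<Longrightarrow> j < d \<Longrightarrow> Y i j \<in> borel_measurable P"
    and part_union: "(\<Union>s<r. E s) = {..<n}"
  shows "{\<omega> \<in> space P. (\<Sum>s\<in>{s. s < r \<and> v s}. card (envelope d r v E Y lam \<rho> p h s \<omega>)) \<le> 3 * d \<and>
            (\<forall>s. s < r \<and> v s \<longrightarrow> Qstar d M p h (E s) \<subseteq> envelope d r v E Y lam \<rho> p h s \<omega>)} \<in> sets P"
proof -
  define T where "T = {s. s < r \<and> v s}"
  define env where "env s \<omega> = envelope d r v E Y lam \<rho> p h s \<omega>" for s \<omega>
  define pr where "pr s = Max {t. t < s \<and> v t}" for s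
  define su where "su s = Min {t. s < t \<and> t < r \<and> v t}" for s
  have finT: "finite T" unfolding T_def by simp
  have Esub: "E t \<subseteq> {..<n}" if "t < r" for t using part_union that by blast
  have ybm: "ybar Y (E t) j \<in> borel_measurable P" if "t < r" "j < d" for t j
  proof -
    have "(\<lambda>\<omega>. \<Sum>i\<in>E t. Y i j \<omega>) \<in> borel_measurable P"
      by (rule borel_measurable_sum) (use Ym Esub[OF that(1)] that(2) in auto)
    then show ?thesis unfolding ybar_def by measurable
  qed
  have prr: "pr s < r" if "s \<in> T" "s \<noteq> Min T" for s
  proof -
    have "Min T \<le> s" using that finT by simp
    then have "Min T < s" using that by simp
    moreover have "Min T \<in> T" using finT that by (metis Min_in empty_iff)
    ultimately have "Min T \<in> {t. t < s \<and> v t}" by (simp add: T_def)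
    then have ne2: "{t. t < s \<and> v t} \<noteq> {}" by auto
    have "pr s \<in> {t. t < s \<and> v t}" unfolding pr_def using Max_in[OF _ ne2] by simp
    then show ?thesis using that by (simp add: T_def)
  qed
  have sur: "su s < r" if "s \<in> T" "s \<noteq> Max T" for s
  proof -
    have "s \<le> Max T" using that finT by simp
    then have "s < Max T" using that by simp
    moreover have "Max T \<in> T" using finT that by (metis Max_in empty_iff)
    ultimately have "Max T \<in> {t. s < t \<and> t < r \<and> v t}" by (simp add: T_def)
    then have ne2: "{t. s < t \<and> t < r \<and> v t} \<noteq> {}" by auto
    have "su s \<in> {t. s < t \<and> t < r \<and> v t}" unfolding su_def using Min_in[OF _ ne2] by simp
    then show ?thesis by simp
  qed
  have mem: "j \<in> env s \<omega> \<longleftrightarrow> j < d \<and> (s = Min T \<or> lam * (p + h) - \<rho> * sqrt (lam / real (card (E (pr s)))) \<le> ybar Y (E (pr s)) j \<omega>)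
                 \<and> (s = Max T \<or> ybar Y (E (su s)) j \<omega> \<le> lam * (p - h) + \<rho> * sqrt (lam / real (card (E (su s)))))" for s j \<omega>
    by (auto simp: env_def envelope_def Let_def T_def pr_def su_def)
  have envsub: "env s \<omega> \<subseteq> {..<d}" for s \<omega> using mem by auto
  have pe: "Measurable.pred P (\<lambda>\<omega>. j \<in> env s \<omega>)" if sT: "s \<in> T" and jd: "j < d" for s j
  proof -
    have A: "Measurable.pred P (\<lambda>\<omega>. s = Min T \<or> lam * (p + h) - \<rho> * sqrt (lam / real (card (E (pr s)))) \<le> ybar Y (E (pr s)) j \<omega>)"
    proof (cases "s = Min T")
      case True
      have "Measurable.pred P (\<lambda>\<omega>. True)" by (rule measurable_const) simp
      then show ?thesis using True by simp
    next
      case False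
      note [measurable] = ybm[OF prr[OF sT False] jd]
      have "Measurable.pred P (\<lambda>\<omega>. lam * (p + h) - \<rho> * sqrt (lam / real (card (E (pr s)))) \<le> ybar Y (E (pr s)) j \<omega>)" by measurable
      then show ?thesis using False by simp
    qed
    have B: "Measurable.pred P (\<lambda>\<omega>. s = Max T \<or> ybar Y (E (su s)) j \<omega> \<le> lam * (p - h) + \<rho> * sqrt (lam / real (card (E (su s)))))"
    proof (cases "s = Max T")
      case True
      have "Measurable.pred P (\<lambda>\<omega>. True)" by (rule measurable_const) simp
      then show ?thesis using True by simp
    next
      case False
      note [measurable] = ybm[OF sur[OF sT False] jd]
      have "Measurable.pred P (\<lambda>\<omega>. ybar Y (E (su s)) j \<omega> \<le> lam * (p - h) + \<rho> * sqrt (lam / real (card (E (su s)))))" by measurable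
      then show ?thesis using False by simp
    qed
    have "Measurable.pred P (\<lambda>\<omega>. j < d \<and> (s = Min T \<or> lam * (p + h) - \<rho> * sqrt (lam / real (card (E (pr s)))) \<le> ybar Y (E (pr s)) j \<omega>)
                 \<and> (s = Max T \<or> ybar Y (E (su s)) j \<omega> \<le> lam * (p - h) + \<rho> * sqrt (lam / real (card (E (su s))))))"
      using A B by measurable
    then show ?thesis by (simp only: mem)
  qed
  define f where "f \<omega> = (\<Sum>s\<in>T. \<Sum>j<d. if j \<in> env s \<omega> then 1 else (0::real))" for \<omega>
  have fm[measurable]: "f \<in> borel_measurable P"
    unfolding f_def
  proof (intro borel_measurable_sum)
    fix s j assume "s \<in> T" "j \<in> {..<d}"
    then have "Measurable.pred P (\<lambda>\<omega>. j \<in> env s \<omega>)" using pe by simp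
    then show "(\<lambda>\<omega>. if j \<in> env s \<omega> then 1 else (0::real)) \<in> borel_measurable P"
      by (intro measurable_If) (auto simp: pred_def)
  qed
  have pq: "Measurable.pred P (\<lambda>\<omega>. \<forall>s\<in>T. \<forall>j\<in>Qstar d M p h (E s). j \<in> env s \<omega>)"
  proof (intro pred_intros_countable_bounded(3))
    fix s j assume "s \<in> T" "j \<in> Qstar d M p h (E s)"
    then show "Measurable.pred P (\<lambda>\<omega>. j \<in> env s \<omega>)" using pe by (auto simp: Qstar_def)
  qed
  have eq: "{\<omega> \<in> space P. (\<Sum>s\<in>{s. s < r \<and> v s}. card (envelope d r v E Y lam \<rho> p h s \<omega>)) \<le> 3 * d \<and>
            (\<forall>s. s < r \<and> v s \<longrightarrow> Qstar d M p h (E s) \<subseteq> envelope d r v E Y lam \<rho> p h s \<omega>)}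
       = {\<omega> \<in> space P. f \<omega> \<le> real (3 * d) \<and> (\<forall>s\<in>T. \<forall>j\<in>Qstar d M p h (E s). j \<in> env s \<omega>)}"
  proof -
    have "real (\<Sum>s\<in>T. card (env s \<omega>)) = f \<omega>" for \<omega>
      unfolding f_def by (simp only: of_nat_sum) (intro sum.cong refl card_as_sum envsub, simp)
    then have "(\<Sum>s\<in>T. card (env s \<omega>)) \<le> 3 * d \<longleftrightarrow> f \<omega> \<le> real (3 * d)" for \<omega>
      by (metis of_nat_le_iff)
    then show ?thesis by (auto simp: T_def env_def)
  qed
  show ?thesis unfolding eq using pq by measurable
qed


theorem mainTheorem7:
  fixes P :: "'a measure"
    and n d r :: nat
    and \<pi> \<eta> :: "nat \<Rightarrow> nat"
    and M :: "nat \<Rightarrow> nat \<Rightarrow> real"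
    and p h \<sigma> \<delta> \<mu> :: real
    and N :: "nat \<Rightarrow> nat \<Rightarrow> 'a \<Rightarrow> nat"
    and W :: "nat \<Rightarrow> nat \<Rightarrow> nat \<Rightarrow> 'a \<Rightarrow> real"
    and E :: "nat \<Rightarrow> nat set"
    and v :: "nat \<Rightarrow> bool"
  assumes P: "prob_space P"
    and nd: "1 \<le> n" "1 \<le> d" "2 \<le> max n d"
    and perm: "\<pi> permutes {..<n}" "\<eta> permutes {..<d}"
    and Mbiso: "M \<in> C_Biso n d \<pi> \<eta>"
    and ph: "0 \<le> p" "p \<le> 1" "0 < h" "h \<le> 1"
    and sig: "0 < \<sigma>"
    and del: "0 < \<delta>" "\<delta> < 1"
    and mu: "0 < \<mu>"
    and N_meas: "\<And>i j. i < n \<Longrightarrow> j < d \<Longrightarrow> N i j \<in> measurable P (count_space UNIV)"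
    and N_pois: "\<And>i j. i < n \<Longrightarrow> j < d \<Longrightarrow>
                  distr P (count_space UNIV) (N i j) = measure_pmf (poisson_pmf \<mu>)"
    and W_meas: "\<And>i j k. i < n \<Longrightarrow> j < d \<Longrightarrow> W i j k \<in> borel_measurable P"
    and W_centered: "\<And>i j k. i < n \<Longrightarrow> j < d \<Longrightarrow> prob_space.expectation P (W i j k) = 0"
    and W_mgf_int: "\<And>i j k t. i < n \<Longrightarrow> j < d \<Longrightarrow> integrable P (\<lambda>\<omega>. exp (t * W i j k \<omega>))"
    and W_subg: "\<And>i j k t. i < n \<Longrightarrow> j < d \<Longrightarrow>
                  prob_space.expectation P (\<lambda>\<omega>. exp (t * W i j k \<omega>)) \<le> exp (t\<^sup>2 * \<sigma>\<^sup>2 / 2)"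
    and indep: "prob_space.indep_vars P (\<lambda>_. borel)
                  (\<lambda>x \<omega>. case x of Inl (i, j) \<Rightarrow> real (N i j \<omega>) | Inr (i, j, k) \<Rightarrow> W i j k \<omega>)
                  ({Inl (i, j) | i j. i < n \<and> j < d} \<union> {Inr (i, j, k) | i j k. i < n \<and> j < d})"
    and part_nonempty: "\<And>s. s < r \<Longrightarrow> E s \<noteq> {}"
    and part_disj: "\<And>s s'. s < r \<Longrightarrow> s' < r \<Longrightarrow> s \<noteq> s' \<Longrightarrow> E s \<inter> E s' = {}"
    and part_union: "(\<Union>s<r. E s) = {..<n}"
    and cond_i: "\<And>s. s < r \<Longrightarrow> v s \<Longrightarrow>
                  (1 - exp (- \<mu>)) * real (card (E s)) > 4 * (rho_const \<sigma> n d \<delta>)\<^sup>2 / h\<^sup>2"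
    and cond_ii: "\<And>s s' i i'. s < s' \<Longrightarrow> s' < r \<Longrightarrow> v s \<Longrightarrow> v s' \<Longrightarrow>
                  i \<in> E s \<Longrightarrow> i' \<in> E s' \<Longrightarrow> \<pi> i < \<pi> i'"
  shows "measure P {\<omega> \<in> space P.
            (\<Sum>s\<in>{s. s < r \<and> v s}.
               card (envelope d r v E (Ytilde M N W) (1 - exp (- \<mu>)) (rho_const \<sigma> n d \<delta>) p h s \<omega>))
              \<le> 3 * d \<and>
            (\<forall>s. s < r \<and> v s \<longrightarrow>
               Qstar d M p h (E s) \<subseteq>
                 envelope d r v E (Ytilde M N W) (1 - exp (- \<mu>)) (rho_const \<sigma> n d \<delta>) p h s \<omega>)}
         \<ge> 1 - \<delta> / (12 * real_of_int \<lceil>log 2 (real (max n d))\<rceil> * sqrt (real (max n d)))"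
proof -
  interpret prob_space P by (rule P)
  define lam where "lam = 1 - exp (- \<mu>)"
  define \<rho> where "\<rho> = rho_const \<sigma> n d \<delta>"
  define L where "L = Lconst n d \<delta>"
  define c0 where "c0 = real_of_int \<lceil>log 2 (real (max n d))\<rceil>"
  define X0 where "X0 = 24 * real n * real d * sqrt (real (max n d)) * c0 / \<delta>"
  define T where "T = {s. s < r \<and> v s}"
  have LX: "L = ln X0" by (simp add: L_def Lconst_def X0_def c0_def)
  have c0: "1 \<le> c0"
  proof -
    have "log 2 2 \<le> log 2 (real (max n d))" using nd by (subst log_le_cancel_iff) auto
    then have "1 \<le> log 2 (real (max n d))" by simp
    then show ?thesis unfolding c0_def by linarith
  qed
  have sq: "1 \<le> sqrt (real (max n d))" using nd by simp
  have nd0: "1 \<le> real n" "1 \<le> real d" using nd by auto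
  have X0: "1 < X0"
  proof -
    have "1 * 1 \<le> real n * real d" using nd0 by (intro mult_mono) auto
    then have "1 * 1 \<le> real n * real d * sqrt (real (max n d))" using sq by (intro mult_mono) auto
    then have "1 * 1 \<le> real n * real d * sqrt (real (max n d)) * c0" using c0 by (intro mult_mono) auto
    then have "1 \<le> real n * real d * sqrt (real (max n d)) * c0" by simp
    then have K: "24 \<le> 24 * real n * real d * sqrt (real (max n d)) * c0" by linarith
    have "(24 * real n * real d * sqrt (real (max n d)) * c0) * \<delta> < (24 * real n * real d * sqrt (real (max n d)) * c0) * 1"
      by (rule mult_strict_left_mono) (use del K in linarith)+
    then have "24 * real n * real d * sqrt (real (max n d)) * c0 < 24 * real n * real d * sqrt (real (max n d)) * c0 / \<delta>"
      using del by (simp add: less_divide_eq)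
    then show ?thesis unfolding X0_def using K by linarith
  qed
  have L0: "0 < L" using X0 LX by simp
  have eL: "exp (- L) = 1 / X0" using X0 LX by (simp add: exp_minus inverse_eq_divide)
  have rho: "\<rho> = max 1 \<sigma> * exp 1 * sqrt (8 * L)" by (simp add: \<rho>_def rho_const_def L_def)
  have rho0: "0 \<le> \<rho>" using rho L0 by simp
  have lam: "0 < lam" "lam \<le> 1" using mu by (auto simp: lam_def)
  have ind': "indep_vars (\<lambda>_. borel) (XX N W) (II n d)"
    using indep unfolding XX_def II_def .
  have Esub: "E t \<subseteq> {..<n}" if "t < r" for t using part_union that by blast
  have finT: "finite T" by (simp add: T_def)
  have cardT: "card T \<le> n"
  proof -
    define f where "f t = (SOME i. i \<in> E t)" for t
    have fE: "f t \<in> E t" if "t \<in> T" for t using part_nonempty[of t] that unfolding f_def T_def by (simp add: some_in_eq)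
    have "inj_on f T"
    proof (rule inj_onI)
      fix a b assume "a \<in> T" "b \<in> T" "f a = f b"
      show "a = b"
      proof (rule ccontr)
        assume "a \<noteq> b"
        then have "E a \<inter> E b = {}" using part_disj \<open>a \<in> T\<close> \<open>b \<in> T\<close> by (auto simp: T_def)
        then show False using fE[OF \<open>a \<in> T\<close>] fE[OF \<open>b \<in> T\<close>] \<open>f a = f b\<close> by auto
      qed
    qed
    moreover have "f ` T \<subseteq> {..<n}" using fE Esub by (auto simp: T_def)
    ultimately show ?thesis using card_inj_on_le[of f T "{..<n}"] by simp
  qed
  have Ym: "Ytilde M N W i j \<in> borel_measurable P" if "i < n" "j < d" for i j
    using Ytilde_meas[where N=N and W=W and i=i and j=j, OF N_meas[OF that] W_meas[OF that]] .
  have Mb: "0 \<le> M i j \<and> M i j \<le> 1" if "i < n" "j < d" for i j using Mbiso that by (simp add: C_Biso_def)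
  define SY where "SY t j \<omega> = (\<Sum>i\<in>E t. Ytilde M N W i j \<omega> - lam * M i j)" for t j \<omega>
  define B where "B x = {\<omega>\<in>space P. real (card (E (fst x))) * (\<rho> * sqrt (lam / real (card (E (fst x)))))
                          \<le> snd (snd x) * SY (fst x) (fst (snd x)) \<omega>}" for x :: "nat \<times> nat \<times> real"
  define Ix where "Ix = T \<times> {..<d} \<times> {1, -1::real}"
  have finIx: "finite Ix" using finT by (simp add: Ix_def)
  have Bm: "B x \<in> sets P" if "x \<in> Ix" for x
  proof -
    obtain t j c where x0: "x = (t, j, c)" by (cases x)
    then have x: "x = (t, j, c)" "t \<in> T" "j < d" using that by (auto simp: Ix_def)
    have "(\<lambda>\<omega>. SY t j \<omega>) \<in> borel_measurable P"
    proof (unfold SY_def, rule borel_measurable_sum)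
      fix i assume "i \<in> E t"
      then have "i < n" using Esub x(2) by (auto simp: T_def)
      note [measurable] = Ym[OF this x(3)]
      show "(\<lambda>\<omega>. Ytilde M N W i j \<omega> - lam * M i j) \<in> borel_measurable P" by measurable
    qed
    then have [measurable]: "SY t j \<in> borel_measurable P" by simp
    show ?thesis unfolding B_def x fst_conv snd_conv by measurable
  qed
  have Bp: "measure P (B x) \<le> exp (- L)" if "x \<in> Ix" for x
  proof -
    obtain t j c where x0: "x = (t, j, c)" by (cases x)
    then have x: "x = (t, j, c)" "t \<in> T" "j < d" "c = 1 \<or> c = -1" using that by (auto simp: Ix_def)
    have tr: "t < r" "v t" using x by (auto simp: T_def)
    have iE: "i < n" if "i \<in> E t" for i using that Esub[OF tr(1)] by auto
    have Bx: "B x = {\<omega>\<in>space P. real (card (E t)) * (\<rho> * sqrt ((1 - exp (- \<mu>)) / real (card (E t))))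
            \<le> c * (\<Sum>i\<in>E t. Ytilde M N W i j \<omega> - (1 - exp (- \<mu>)) * M i j)}"
      by (simp add: B_def x SY_def lam_def)
    have "emeasure P (B x) \<le> ennreal (exp (- L))"
      unfolding Bx
      by (rule chernoff_block[where A=M and N=N and W=W and \<mu>=\<mu> and \<sigma>=\<sigma>, OF ind' Esub[OF tr(1)] part_nonempty[OF tr(1)] x(3)
            N_meas[OF iE x(3)] N_pois[OF iE x(3)] W_meas[OF iE x(3)] W_mgf_int[OF iE x(3)] W_subg[OF iE x(3)] sig mu
            Mb[OF iE x(3)] refl L0 rho ph(3) ph(4) cond_i[OF tr, folded \<rho>_def] x(4)])
    then show ?thesis by (simp add: emeasure_eq_measure)
  qed
  have cardIx: "real (card Ix) \<le> 2 * real n * real d"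
  proof -
    have "card Ix = card T * (d * 2)" by (simp add: Ix_def card_cartesian_product)
    then show ?thesis using cardT by simp (intro mult_left_mono, auto)
  qed
  have union: "measure P (\<Union>x\<in>Ix. B x) \<le> \<delta> / (12 * c0 * sqrt (real (max n d)))"
  proof -
    have "measure P (\<Union>x\<in>Ix. B x) \<le> (\<Sum>x\<in>Ix. measure P (B x))"
      by (rule finite_measure_subadditive_finite[OF finIx]) (use Bm in auto)
    also have "\<dots> \<le> (\<Sum>x\<in>Ix. exp (- L))" by (intro sum_mono Bp)
    also have "\<dots> = real (card Ix) * exp (- L)" by simp
    also have "\<dots> \<le> 2 * real n * real d * exp (- L)" using cardIx by (intro mult_right_mono) auto
    also have "\<dots> = \<delta> / (12 * c0 * sqrt (real (max n d)))"
      using nd0 sq c0 del unfolding eL X0_def by (simp add: field_simps)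
    finally show ?thesis .
  qed
  define Good where "Good = space P - (\<Union>x\<in>Ix. B x)"
  have UBm: "(\<Union>x\<in>Ix. B x) \<in> sets P" using Bm finIx by auto
  have mGood: "measure P Good = 1 - measure P (\<Union>x\<in>Ix. B x)"
    unfolding Good_def by (rule prob_compl[OF UBm])
  let ?Tg = "{\<omega> \<in> space P.
            (\<Sum>s\<in>{s. s < r \<and> v s}.
               card (envelope d r v E (Ytilde M N W) (1 - exp (- \<mu>)) (rho_const \<sigma> n d \<delta>) p h s \<omega>))
              \<le> 3 * d \<and>
            (\<forall>s. s < r \<and> v s \<longrightarrow>
               Qstar d M p h (E s) \<subseteq>
                 envelope d r v E (Ytilde M N W) (1 - exp (- \<mu>)) (rho_const \<sigma> n d \<delta>) p h s \<omega>)}"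
  have Tm: "?Tg \<in> sets P" by (rule target_meas[OF Ym part_union])
  have sub: "Good \<subseteq> ?Tg"
  proof
    fix \<omega> assume g: "\<omega> \<in> Good"
    then have sp: "\<omega> \<in> space P" by (simp add: Good_def)
    have good: "\<bar>\<Sum>i\<in>E t. Ytilde M N W i j \<omega> - lam * M i j\<bar> < real (card (E t)) * (\<rho> * sqrt (lam / real (card (E t))))"
      if "t < r" "v t" "j < d" for t j
    proof -
      have "(t, j, 1) \<in> Ix" "(t, j, -1) \<in> Ix" using that by (auto simp: Ix_def T_def)
      then have "\<omega> \<notin> B (t, j, 1)" "\<omega> \<notin> B (t, j, -1)" using g by (auto simp: Good_def)
      then show ?thesis using sp by (auto simp: B_def SY_def)
    qed
    have "(\<Sum>s\<in>{s. s < r \<and> v s}. card (envelope d r v E (Ytilde M N W) lam \<rho> p h s \<omega>)) \<le> 3 * d \<and>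
         (\<forall>s. s < r \<and> v s \<longrightarrow> Qstar d M p h (E s) \<subseteq> envelope d r v E (Ytilde M N W) lam \<rho> p h s \<omega>)"
      by (rule deterministic[where Y="Ytilde M N W" and \<omega>=\<omega> and E=E and v=v and r=r and M=M, OF perm Mbiso lam(1) rho0 ph(3) part_nonempty part_union _ cond_ii good])
         (use cond_i in \<open>auto simp: lam_def \<rho>_def\<close>)
    then show "\<omega> \<in> ?Tg" using sp by (simp add: lam_def \<rho>_def)
  qed
  have "measure P Good \<le> measure P ?Tg" by (rule finite_measure_mono[OF sub Tm])
  moreover have "1 - \<delta> / (12 * c0 * sqrt (real (max n d))) \<le> measure P Good" using mGood union by simp
  ultimately show ?thesis by (simp add: c0_def)
qed


end
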